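(* Let $f$ be a polynomial of degree at least two with positive integer coefficients. If $D$ is a Siegel disk of $f$, then $D$ is disjoint from $f^{-m}(\mathbb{Z}[i])=\{z: f^m(z)\in\mathbb{Z}[i]\}$ for every non-negative integer $m$, where $\mathbb{Z}[i]=\{a+ib: a,b\in\mathbb{Z}\}$.
   Context: The Fatou set $F(f)$ of a polynomial $f$ is the complement of its Julia set (the boundary of the set of points with bounded forward orbit). A Siegel disk is a periodic Fatou component $D$ (with $f^p(D)\subseteq D$) on which $f^p$ is analytically conjugate to an irrational Euclidean rotation of the unit disk. $f^m$ denotes the $m$-th iterate. *)

theory Defs
  imports "HOL-Complex_Analysis.Complex_Analysis" "HOL-Computational_Algebra.Polynomial"
begin

definition filled_julia :: "(complex \<Rightarrow> complex) \<Rightarrow> complex set" where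
  "filled_julia f = {z. bounded (range (\<lambda>n. (f ^^ n) z))}"

definition julia_set :: "(complex \<Rightarrow> complex) \<Rightarrow> complex set" where
  "julia_set f = frontier (filled_julia f)"

definition fatou_set :: "(complex \<Rightarrow> complex) \<Rightarrow> complex set" where
  "fatou_set f = - julia_set f"

definition fatou_component :: "(complex \<Rightarrow> complex) \<Rightarrow> complex set \<Rightarrow> bool" where
  "fatou_component f D \<longleftrightarrow> (\<exists>z \<in> fatou_set f. D = connected_component_set (fatou_set f) z)"

definition siegel_disk :: "(complex \<Rightarrow> complex) \<Rightarrow> complex set \<Rightarrow> bool" where
  "siegel_disk f D \<longleftrightarrow> fatou_component f D \<and>
     (\<exists>p::nat. p \<ge> 1 \<and> (f ^^ p) ` D \<subseteq> D \<and>
       (\<exists>\<phi> \<theta>. \<phi> holomorphic_on D \<and> bij_betw \<phi> D (ball 0 1) \<and>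
              (inv_into D \<phi>) holomorphic_on (ball 0 1) \<and>
              (\<theta>::real) \<notin> \<rat> \<and>
              (\<forall>z\<in>D. \<phi> ((f ^^ p) z) = exp (2 * pi * \<i> * complex_of_real \<theta>) * \<phi> z)))"

definition gaussian_ints :: "complex set" where
  "gaussian_ints = {z. Re z \<in> \<int> \<and> Im z \<in> \<int>}"

end

theory Submission
  imports Defs
begin

lemma G_add: "a \<in> gaussian_ints \<Longrightarrow> b \<in> gaussian_ints \<Longrightarrow> a + b \<in> gaussian_ints"
  by (auto simp: gaussian_ints_def)
lemma G_mult: "a \<in> gaussian_ints \<Longrightarrow> b \<in> gaussian_ints \<Longrightarrow> a * b \<in> gaussian_ints"
  by (auto simp: gaussian_ints_def)
lemma G_nat: "of_nat n \<in> gaussian_ints"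
  by (auto simp: gaussian_ints_def)
lemma G_pow: "a \<in> gaussian_ints \<Longrightarrow> a ^ n \<in> gaussian_ints"
  by (induction n) (auto simp: G_mult gaussian_ints_def)
lemma G_sum: "finite A \<Longrightarrow> (\<And>i. i \<in> A \<Longrightarrow> h i \<in> gaussian_ints) \<Longrightarrow> sum h A \<in> gaussian_ints"
  by (induction A rule: finite_induct) (auto simp: G_add gaussian_ints_def)
lemma G_poly: "(\<And>k. coeff g k \<in> gaussian_ints) \<Longrightarrow> x \<in> gaussian_ints \<Longrightarrow> poly g x \<in> gaussian_ints"
  unfolding poly_altdef by (intro G_sum) (auto intro: G_mult G_pow)

lemma G_finite: "bounded A \<Longrightarrow> finite (A \<inter> gaussian_ints)"
proof -
  assume "bounded A"
  then obtain R where R: "\<And>x. x \<in> A \<Longrightarrow> norm x \<le> R" by (meson bounded_iff)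
  define N where "N = \<lceil>R\<rceil>"
  have "A \<inter> gaussian_ints \<subseteq> (\<lambda>(a,b). Complex (of_int a) (of_int b)) ` ({-N..N} \<times> {-N..N})"
  proof
    fix z assume z: "z \<in> A \<inter> gaussian_ints"
    then obtain a b where ab: "Re z = of_int a" "Im z = of_int b" by (auto simp: gaussian_ints_def elim!: Ints_cases)
    have "\<bar>Re z\<bar> \<le> R" "\<bar>Im z\<bar> \<le> R" using R[of z] z abs_Re_le_cmod abs_Im_le_cmod by (auto intro: order_trans)
    hence "\<bar>a\<bar> \<le> N" "\<bar>b\<bar> \<le> N" using ab unfolding N_def by linarith+
    moreover have "z = Complex (of_int a) (of_int b)" using ab by (simp add: complex_eq_iff)
    ultimately show "z \<in> (\<lambda>(a,b). Complex (of_int a) (of_int b)) ` ({-N..N} \<times> {-N..N})"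
      by (auto intro!: image_eqI[of _ _ "(a,b)"])
  qed
  thus ?thesis by (rule finite_subset) auto
qed

lemma rot_ne: fixes \<theta> :: real assumes "\<theta> \<notin> \<rat>" "q > 0"
  shows "exp (2 * pi * \<i> * complex_of_real \<theta>) ^ q \<noteq> 1"
proof
  assume "exp (2 * pi * \<i> * complex_of_real \<theta>) ^ q = 1"
  hence "exp (of_nat q * (2 * pi * \<i> * complex_of_real \<theta>)) = 1" by (simp add: exp_of_nat_mult)
  then obtain n :: int where "2 * pi * real q * \<theta> = of_int (2*n) * pi" by (auto simp: exp_eq_1)
  hence "\<theta> = of_int n / of_nat q" using assms(2) by (simp add: field_simps)
  hence "\<theta> \<in> \<rat>" by simp
  with assms show False by simp
qed

lemma unit_G: assumes "d \<in> gaussian_ints" "norm d = 1" shows "d ^ 4 = 1"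
proof -
  obtain a b where ab: "Re d = of_int a" "Im d = of_int b" using assms(1) by (auto simp: gaussian_ints_def elim!: Ints_cases)
  have "(Re d)^2 + (Im d)^2 = 1" using assms(2) by (simp add: cmod_def)
  hence "a^2 + b^2 = 1" using ab by (metis of_int_add of_int_eq_1_iff of_int_power)
  hence "a^2 \<le> 1" "b^2 \<le> 1" by (smt (verit) zero_le_power2)+
  hence "\<bar>a\<bar> \<le> 1" "\<bar>b\<bar> \<le> 1" by (simp_all add: abs_square_le_1)
  hence "a \<in> {-1,0,1}" "b \<in> {-1,0,1}" by auto
  with \<open>a^2 + b^2 = 1\<close> have "(a = 0 \<and> (b = 1 \<or> b = -1)) \<or> (b = 0 \<and> (a = 1 \<or> a = -1))"
    by auto
  moreover have "d = Complex (of_int a) (of_int b)" using ab by (simp add: complex_eq_iff)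
  ultimately show ?thesis by (auto simp: complex_eq_iff numeral_eq_Suc)
qed


lemma iterG: "(\<And>x. x \<in> gaussian_ints \<Longrightarrow> F x \<in> gaussian_ints) \<Longrightarrow> x \<in> gaussian_ints \<Longrightarrow> (F ^^ n) x \<in> gaussian_ints"
  by (induction n) auto

lemma cont_iter: fixes f :: "complex poly" shows "continuous_on UNIV ((poly f) ^^ n)"
proof (induction n)
  case 0 then show ?case by (simp add: id_def continuous_on_id)
next
  case (Suc n)
  have "continuous_on UNIV (\<lambda>x. poly f (((poly f) ^^ n) x))"
    by (rule continuous_on_poly[OF Suc.IH])
  then show ?case by (simp add: o_def)
qed

lemma deriv_iter:
  assumes "\<And>k. coeff f k \<in> gaussian_ints" "x \<in> gaussian_ints"
  shows "\<exists>d \<in> gaussian_ints. (((poly f) ^^ n) has_field_derivative d) (at x)"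
proof (induction n)
  case 0 show ?case
    by (rule bexI[of _ 1]) (auto simp: id_def gaussian_ints_def intro: DERIV_ident)
next
  case (Suc n)
  then obtain d where d: "d \<in> gaussian_ints" "(((poly f) ^^ n) has_field_derivative d) (at x)" by blast
  have FG: "\<And>y. y \<in> gaussian_ints \<Longrightarrow> poly f y \<in> gaussian_ints" using assms(1) G_poly by blast
  have pG: "\<And>k. coeff (pderiv f) k \<in> gaussian_ints"
    by (simp add: coeff_pderiv G_mult G_nat assms(1) del: of_nat_Suc)
  have "((poly f \<circ> ((poly f) ^^ n)) has_field_derivative poly (pderiv f) (((poly f) ^^ n) x) * d) (at x)"
    by (rule DERIV_chain[OF poly_DERIV d(2)])
  moreover have "poly (pderiv f) (((poly f) ^^ n) x) * d \<in> gaussian_ints"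
    by (intro G_mult d(1) G_poly pG iterG[where F="poly f"] FG assms(2))
  ultimately show ?case by (auto simp: comp_def)
qed

theorem lemma2p9:
  fixes f :: "complex poly" and D :: "complex set"
  assumes "degree f \<ge> 2"
    and "\<forall>k \<le> degree f. \<exists>n::nat. n > 0 \<and> coeff f k = of_nat n"
    and "siegel_disk (poly f) D"
  shows "\<forall>m::nat. D \<inter> {z. ((poly f) ^^ m) z \<in> gaussian_ints} = {}"
proof (intro allI, rule ccontr)
  fix m assume "D \<inter> {z. ((poly f) ^^ m) z \<in> gaussian_ints} \<noteq> {}"
  then obtain z where zD: "z \<in> D" and wG: "((poly f) ^^ m) z \<in> gaussian_ints" by blast
  define F where "F = poly f"
  define w where "w = (F ^^ m) z"
  have wG': "w \<in> gaussian_ints" using wG by (simp add: w_def F_def)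
  have coefG: "\<And>k. coeff f k \<in> gaussian_ints"
  proof -
    fix k show "coeff f k \<in> gaussian_ints"
    proof (cases "k \<le> degree f")
      case True then show ?thesis using assms(2) G_nat by metis
    next
      case False then show ?thesis using coeff_eq_0[of f k] G_nat[of 0] by simp
    qed
  qed
  have FG: "\<And>y. y \<in> gaussian_ints \<Longrightarrow> F y \<in> gaussian_ints" unfolding F_def using coefG G_poly by blast
  have IG: "\<And>y n. y \<in> gaussian_ints \<Longrightarrow> (F ^^ n) y \<in> gaussian_ints" using iterG FG by blast
  obtain z0 where z0: "z0 \<in> fatou_set F" "D = connected_component_set (fatou_set F) z0"
    using assms(3) unfolding siegel_disk_def fatou_component_def F_def by blast
  have Dopen: "open D" using z0 unfolding fatou_set_def julia_set_def
    by (simp add: open_connected_component open_Compl)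
  obtain p \<phi> \<theta> where p: "p \<ge> 1" "(F ^^ p) ` D \<subseteq> D" and
    \<phi>: "\<phi> holomorphic_on D" "bij_betw \<phi> D (ball 0 1)" "(inv_into D \<phi>) holomorphic_on (ball 0 1)"
       "(\<theta>::real) \<notin> \<rat>" "\<forall>x\<in>D. \<phi> ((F ^^ p) x) = exp (2 * pi * \<i> * complex_of_real \<theta>) * \<phi> x"
    using assms(3) unfolding siegel_disk_def F_def by blast
  define lam where "lam = exp (2 * pi * \<i> * complex_of_real \<theta>)"
  define \<psi> where "\<psi> = inv_into D \<phi>"
  have lam1: "norm lam = 1" by (simp add: lam_def)
  have lam0: "lam \<noteq> 0" by (simp add: lam_def)
  have inj: "inj_on \<phi> D" using \<phi>(2) bij_betw_imp_inj_on by blast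
  have \<phi>ball: "\<And>x. x \<in> D \<Longrightarrow> \<phi> x \<in> ball 0 1" using \<phi>(2) bij_betwE by blast
  have \<psi>\<phi>: "\<And>x. x \<in> D \<Longrightarrow> \<psi> (\<phi> x) = x" unfolding \<psi>_def using inj by (simp add: inv_into_f_f)
  have conj: "\<And>x. x \<in> D \<Longrightarrow> \<phi> ((F ^^ p) x) = lam * \<phi> x" using \<phi>(5) lam_def by blast
  have pD: "\<And>x. x \<in> D \<Longrightarrow> (F ^^ p) x \<in> D" using p(2) by blast
  have orbit: "\<And>k. (F ^^ (p*k)) z \<in> D \<and> \<phi> ((F ^^ (p*k)) z) = lam ^ k * \<phi> z"
  proof -
    fix k show "(F ^^ (p*k)) z \<in> D \<and> \<phi> ((F ^^ (p*k)) z) = lam ^ k * \<phi> z"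
    proof (induction k)
      case 0 then show ?case using zD by simp
    next
      case (Suc k)
      have eq: "(F ^^ (p * Suc k)) z = (F ^^ p) ((F ^^ (p*k)) z)"
        by (simp add: funpow_add)
      show ?case unfolding eq using Suc pD conj by auto
    qed
  qed
  define K where "K = \<psi> ` sphere 0 (norm (\<phi> z))"
  have "sphere 0 (norm (\<phi> z)) \<subseteq> ball 0 1" using \<phi>ball[OF zD] by auto
  moreover have "continuous_on (ball 0 1) \<psi>" using \<phi>(3) \<psi>_def holomorphic_on_imp_continuous_on by blast
  ultimately have Kc: "compact K" unfolding K_def
    by (meson compact_continuous_image compact_sphere continuous_on_subset)
  have orbK: "\<And>k. (F ^^ (p*k)) z \<in> K"
  proof -
    fix k
    have "(F ^^ (p*k)) z = \<psi> (lam ^ k * \<phi> z)" using orbit[of k] \<psi>\<phi> by metis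
    moreover have "lam ^ k * \<phi> z \<in> sphere 0 (norm (\<phi> z))" by (simp add: norm_mult norm_power lam1)
    ultimately show "(F ^^ (p*k)) z \<in> K" unfolding K_def by blast
  qed
  define B where "B = (\<Union>j<p. (F ^^ j) ` K)"
  have "compact B" unfolding B_def
    using Kc cont_iter[where f=f] F_def by (intro compact_UN) (auto intro: compact_continuous_image continuous_on_subset)
  hence Bb: "bounded B" by (rule compact_imp_bounded)
  have orbB: "\<And>n. (F ^^ n) z \<in> B"
  proof -
    fix n
    have "n = n mod p + p * (n div p)" by simp
    hence "(F ^^ n) z = (F ^^ (n mod p)) ((F ^^ (p * (n div p))) z)" by (metis funpow_add o_apply)
    moreover have "n mod p < p" using p(1) by simp
    ultimately show "(F ^^ n) z \<in> B" unfolding B_def using orbK by blast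
  qed
  have wit: "\<And>n. (F ^^ n) w = (F ^^ (n + m)) z" unfolding w_def by (simp add: funpow_add)
  have "range (\<lambda>n. (F ^^ n) w) \<subseteq> B \<inter> gaussian_ints"
  proof
    fix y assume "y \<in> range (\<lambda>n. (F ^^ n) w)"
    then obtain n where "y = (F ^^ n) w" by blast
    thus "y \<in> B \<inter> gaussian_ints" using wit[of n] orbB[of "n+m"] IG[OF wG', of n] by simp
  qed
  hence fin: "finite (range (\<lambda>n. (F ^^ n) w))" using G_finite[OF Bb] finite_subset by blast
  have "\<not> inj (\<lambda>n. (F ^^ n) w)"
  proof
    assume "inj (\<lambda>n. (F ^^ n) w)"
    hence "finite (UNIV :: nat set)" using fin finite_imageD by blast
    thus False by simp
  qed
  then obtain a b where ab: "a \<noteq> b" "(F ^^ a) w = (F ^^ b) w" unfolding inj_def by blast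
  obtain a q where aq: "q > 0" "(F ^^ a) w = (F ^^ (a + q)) w"
  proof (cases "a < b")
    case True then show ?thesis using that[of "b - a" a] ab by simp
  next
    case False then show ?thesis using that[of "a - b" b] ab by simp
  qed
  have per1: "\<And>j. (F ^^ (a + j + q)) w = (F ^^ (a + j)) w"
  proof -
    fix j
    have "(F ^^ (j + (a + q))) w = (F ^^ j) ((F ^^ (a+q)) w)" by (simp add: funpow_add)
    also have "\<dots> = (F ^^ j) ((F ^^ a) w)" using aq by simp
    also have "\<dots> = (F ^^ (j + a)) w" by (simp add: funpow_add)
    finally show "(F ^^ (a + j + q)) w = (F ^^ (a + j)) w" by (simp add: ac_simps)
  qed
  have per: "\<And>t j. (F ^^ (a + j + t * q)) w = (F ^^ (a + j)) w"
  proof -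
    fix t show "\<And>j. (F ^^ (a + j + t * q)) w = (F ^^ (a + j)) w"
    proof (induction t)
      case 0 then show ?case by simp
    next
      case (Suc t)
      have "(F ^^ (a + j + Suc t * q)) w = (F ^^ (a + (j + t * q) + q)) w" by (simp add: ac_simps)
      also have "\<dots> = (F ^^ (a + (j + t*q))) w" by (rule per1)
      also have "\<dots> = (F ^^ (a + j)) w" using Suc[of j] by (simp add: add.assoc)
      finally show ?case .
    qed
  qed
  define k where "k = m + a"
  have Nge: "p * k \<ge> m + a" using p(1) unfolding k_def by (metis mult_1 mult_le_mono1)
  define j where "j = p * k - m - a"
  have "(F ^^ (p*k)) z = (F ^^ (a + j)) w" using wit[of "a+j"] Nge unfolding j_def by simp
  moreover have "(F ^^ (p*(k+q))) z = (F ^^ (a + j + p * q)) w" using wit[of "a+j+p*q"] Nge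
    unfolding j_def by (simp add: algebra_simps)
  ultimately have "(F ^^ (p*(k+q))) z = (F ^^ (p*k)) z" using per[of j p] by (simp add: ac_simps)
  hence "lam ^ (k+q) * \<phi> z = lam ^ k * \<phi> z" using orbit by metis
  hence "lam ^ k * (lam ^ q - 1) * \<phi> z = 0" by (simp add: algebra_simps power_add)
  moreover have "lam ^ q \<noteq> 1" unfolding lam_def using rot_ne \<phi>(4) aq(1) by blast
  ultimately have \<phi>z: "\<phi> z = 0" using lam0 by simp
  have fixz: "\<And>k. (F ^^ (p*k)) z = z"
  proof -
    fix k have "\<phi> ((F ^^ (p*k)) z) = \<phi> z" using orbit[of k] \<phi>z by simp
    thus "(F ^^ (p*k)) z = z" using inj orbit zD inj_on_def by metis
  qed
  have "p * m \<ge> m" using p(1) by (metis mult_1 mult_le_mono1)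
  hence "(F ^^ (p*m)) z = (F ^^ (p*m - m)) w" using wit[of "p*m - m"] by simp
  hence zG: "z \<in> gaussian_ints" using fixz IG wG' by metis
  obtain d where d: "d \<in> gaussian_ints" "((F ^^ p) has_field_derivative d) (at z)"
    using deriv_iter[OF coefG zG] F_def by blast
  obtain \<phi>' where \<phi>': "(\<phi> has_field_derivative \<phi>') (at z)" using \<phi>(1) Dopen zD holomorphic_on_open by blast
  obtain \<psi>' where \<psi>': "(\<psi> has_field_derivative \<psi>') (at (\<phi> z))"
    using \<phi>(3) \<psi>_def \<phi>z holomorphic_on_open[of "ball 0 1"] by fastforce
  have "((\<psi> \<circ> \<phi>) has_field_derivative \<psi>' * \<phi>') (at z)" by (rule DERIV_chain[OF \<psi>' \<phi>'])
  hence "((\<lambda>x. x) has_field_derivative \<psi>' * \<phi>') (at z)"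
    by (rule has_field_derivative_transform_within_open[OF _ Dopen zD]) (simp add: \<psi>\<phi>)
  hence "\<psi>' * \<phi>' = 1" using DERIV_ident DERIV_unique by blast
  hence \<phi>'0: "\<phi>' \<noteq> 0" by auto
  have p1: "(F ^^ p) z = z" using fixz[of 1] by simp
  have "(\<phi> has_field_derivative \<phi>') (at ((F ^^ p) z))" using \<phi>' p1 by simp
  hence "((\<phi> \<circ> (F ^^ p)) has_field_derivative \<phi>' * d) (at z)" by (rule DERIV_chain[OF _ d(2)])
  hence "((\<lambda>x. lam * \<phi> x) has_field_derivative \<phi>' * d) (at z)"
    by (rule has_field_derivative_transform_within_open[OF _ Dopen zD]) (simp add: conj)
  moreover have "((\<lambda>x. lam * \<phi> x) has_field_derivative lam * \<phi>') (at z)" by (rule DERIV_cmult[OF \<phi>'])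
  ultimately have "\<phi>' * d = lam * \<phi>'" by (rule DERIV_unique)
  hence "d = lam" using \<phi>'0 by (simp add: mult.commute)
  hence "lam ^ 4 = 1" using unit_G d(1) lam1 by blast
  moreover have "lam ^ 4 \<noteq> 1" unfolding lam_def using rot_ne \<phi>(4) by (metis zero_less_numeral)
  ultimately show False by simp
qed

end
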